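(* Let $\beta>2\alpha>0$ with $\beta+2\alpha>1$ and $t\in\mathbb{R}^{s_N}$. For all $r>0$ sufficiently small (depending on $A$), $$\frac{J_N(t,r,\overrightarrow{m}^* )}{J_N(0,r,\overrightarrow{m}^* )}=\mathbb{E}_{\rho_N}\big[\exp\{t^TX\}\big],$$ where $X$ is an $s_N$-dimensional random variable whose distribution is strongly log-concave with density $$\rho_N(x)\propto\exp\Big\{-\tfrac{N}{s_N}\Big(\varphi_N\Big(\overrightarrow{m}^*+\sqrt{\tfrac{s_N}{N}}x\Big)-\varphi_N(\overrightarrow{m}^* )\Big)\Big\}\mathbf{1}_{[-\sqrt{N/s_N}\,r,\ \sqrt{N/s_N}\,r]^{s_N}}(x).$$
   Context: $A=\beta I+\alpha(P+P^T)$ is the $s_N\times s_N$ symmetric circulant matrix ($P$ the cyclic shift), $e_k$ the standard basis of $\mathbb{R}^{s_N}$, and $\varphi_N(x)=\frac12x^TAx-\sum_{k=1}^{s_N}\log\cosh(x^TAe_k)$. $m^*$ is the largest solution of $x=\tanh((\beta+2\alpha)x)$ and $\overrightarrow{m}^*=(m^*,\dots,m^* )\in\mathbb{R}^{s_N}$. For $t\in\mathbb{R}^{s_N}$ and $r>0$, $$J_N(t,r,\overrightarrow{m}^* )=\Big(\tfrac{N}{s_N}\Big)^{s_N/2}\exp\Big\{\tfrac{N}{s_N}\varphi_N(\overrightarrow{m}^* )-\sqrt{\tfrac{N}{s_N}}t^T\overrightarrow{m}^*\Big\}\int_{[m^*-r,m^*+r]^{s_N}}\exp\Big\{-\tfrac{N}{s_N}\varphi_N(x)+\sqrt{\tfrac{N}{s_N}}t^Tx\Big\}\mathrm{d}^{s_N}x.$$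 A distribution is strongly log-concave if it has a density $e^{-U}$ with $U$ strongly convex. *)

theory Defs
  imports "HOL-Probability.Probability"
begin

text \<open>Vectors of \<open>\<real>^s\<close> are represented as functions \<open>nat \<Rightarrow> real\<close> restricted to
  indices \<open>{..<s}\<close>; Lebesgue measure on \<open>\<real>^s\<close> is the product measure \<open>lebesgue_s s\<close>.\<close>

definition lebesgue_s :: "nat \<Rightarrow> (nat \<Rightarrow> real) measure" where
  "lebesgue_s s = (\<Pi>\<^sub>M i\<in>{..<s}. lborel)"

text \<open>Entries of \<open>A = \<beta> I + \<alpha> (P + P^T)\<close>, \<open>P\<close> the cyclic shift \<open>(P)_{i,j} = [j = i+1 mod s]\<close>.\<close>
definition Amat :: "real \<Rightarrow> real \<Rightarrow> nat \<Rightarrow> nat \<Rightarrow> nat \<Rightarrow> real" where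
  "Amat \<alpha> \<beta> s i j =
     \<beta> * (if i = j then 1 else 0)
     + \<alpha> * ((if j = (i + 1) mod s then 1 else 0) + (if i = (j + 1) mod s then 1 else 0))"

definition xAe :: "real \<Rightarrow> real \<Rightarrow> nat \<Rightarrow> (nat \<Rightarrow> real) \<Rightarrow> nat \<Rightarrow> real" where
  "xAe \<alpha> \<beta> s x k = (\<Sum>i<s. x i * Amat \<alpha> \<beta> s i k)"

definition phiN :: "real \<Rightarrow> real \<Rightarrow> nat \<Rightarrow> (nat \<Rightarrow> real) \<Rightarrow> real" where
  "phiN \<alpha> \<beta> s x =
     (1/2) * (\<Sum>i<s. \<Sum>j<s. x i * Amat \<alpha> \<beta> s i j * x j)
     - (\<Sum>k<s. ln (cosh (xAe \<alpha> \<beta> s x k)))"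

definition mstar :: "real \<Rightarrow> real \<Rightarrow> real" where
  "mstar \<alpha> \<beta> = (GREATEST x. x = tanh ((\<beta> + 2 * \<alpha>) * x))"

definition mvec :: "real \<Rightarrow> real \<Rightarrow> nat \<Rightarrow> nat \<Rightarrow> real" where
  "mvec \<alpha> \<beta> s = (\<lambda>i. if i < s then mstar \<alpha> \<beta> else undefined)"

definition inner_s :: "nat \<Rightarrow> (nat \<Rightarrow> real) \<Rightarrow> (nat \<Rightarrow> real) \<Rightarrow> real" where
  "inner_s s t x = (\<Sum>i<s. t i * x i)"

definition cube :: "nat \<Rightarrow> real \<Rightarrow> real \<Rightarrow> (nat \<Rightarrow> real) set" where
  "cube s c r = (\<Pi>\<^sub>E i\<in>{..<s}. {c - r .. c + r})"

definition JN :: "real \<Rightarrow> real \<Rightarrow> nat \<Rightarrow> nat \<Rightarrow> (nat \<Rightarrow> real) \<Rightarrow> real \<Rightarrow> real" where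
  "JN \<alpha> \<beta> N s t r =
     (real N / real s) powr (real s / 2)
     * exp (real N / real s * phiN \<alpha> \<beta> s (mvec \<alpha> \<beta> s)
            - sqrt (real N / real s) * inner_s s t (mvec \<alpha> \<beta> s))
     * (\<integral>x. indicator (cube s (mstar \<alpha> \<beta>) r) x
              * exp (- (real N / real s) * phiN \<alpha> \<beta> s x + sqrt (real N / real s) * inner_s s t x)
          \<partial>lebesgue_s s)"

definition rho_un :: "real \<Rightarrow> real \<Rightarrow> nat \<Rightarrow> nat \<Rightarrow> real \<Rightarrow> (nat \<Rightarrow> real) \<Rightarrow> real" where
  "rho_un \<alpha> \<beta> N s r x =
     indicator (cube s 0 (sqrt (real N / real s) * r)) x
     * exp (- (real N / real s) *
            (phiN \<alpha> \<beta> s (\<lambda>i. mvec \<alpha> \<beta> s i + sqrt (real s / real N) * x i)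
             - phiN \<alpha> \<beta> s (mvec \<alpha> \<beta> s)))"

definition convex_s :: "nat \<Rightarrow> (nat \<Rightarrow> real) set \<Rightarrow> bool" where
  "convex_s s C \<longleftrightarrow> C \<subseteq> (\<Pi>\<^sub>E i\<in>{..<s}. UNIV) \<and>
     (\<forall>x\<in>C. \<forall>y\<in>C. \<forall>u::real. 0 \<le> u \<and> u \<le> 1 \<longrightarrow>
        (\<lambda>i. if i < s then u * x i + (1 - u) * y i else undefined) \<in> C)"

definition strongly_convex_on_s :: "nat \<Rightarrow> (nat \<Rightarrow> real) set \<Rightarrow> ((nat \<Rightarrow> real) \<Rightarrow> real) \<Rightarrow> bool" where
  "strongly_convex_on_s s C U \<longleftrightarrow> convex_s s C \<and>
     (\<exists>c>0. \<forall>x\<in>C. \<forall>y\<in>C. \<forall>u::real. 0 \<le> u \<and> u \<le> 1 \<longrightarrow>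
        (let V = (\<lambda>z. U z - c / 2 * (\<Sum>i<s. (z i)^2)) in
         V (\<lambda>i. if i < s then u * x i + (1 - u) * y i else undefined)
           \<le> u * V x + (1 - u) * V y))"

definition strongly_log_concave_density :: "nat \<Rightarrow> ((nat \<Rightarrow> real) \<Rightarrow> real) \<Rightarrow> bool" where
  "strongly_log_concave_density s f \<longleftrightarrow>
     f \<in> borel_measurable (lebesgue_s s) \<and>
     (\<forall>x\<in>space (lebesgue_s s). 0 \<le> f x) \<and>
     integrable (lebesgue_s s) f \<and> (\<integral>x. f x \<partial>lebesgue_s s) = 1 \<and>
     (\<exists>C U. strongly_convex_on_s s C U \<and>
        (\<forall>x\<in>space (lebesgue_s s). f x = (if x \<in> C then exp (- U x) else 0)))"

end

theory Submission
  imports Defs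
begin

lemma lborel_pre_affine:
  fixes c m :: real assumes "c > 0" and B: "B \<in> sets borel"
  shows "ennreal c * emeasure lborel ((\<lambda>u. m + c * u) -` B) = emeasure lborel B"
proof -
  have "emeasure lborel B = emeasure (density (distr lborel borel (\<lambda>u. m + c * u)) (\<lambda>_. ennreal \<bar>c\<bar>)) B"
    using lborel_real_affine[of c m] assms by simp
  also have "\<dots> = ennreal c * emeasure (distr lborel borel (\<lambda>u. m + c * u)) B"
    using assms by (subst emeasure_density_const) auto
  also have "\<dots> = ennreal c * emeasure lborel ((\<lambda>u. m + c * u) -` B)"
    using B by (subst emeasure_distr) auto
  finally show ?thesis by simp
qed

lemma psf_lborel: "product_sigma_finite (\<lambda>_::nat. lborel::real measure)"
  by (simp add: product_sigma_finite_def lborel.sigma_finite_measure_axioms)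

lemma lebesgue_s_affine:
  fixes c m :: real assumes c: "c > 0"
  shows "lebesgue_s s = density (distr (lebesgue_s s) (lebesgue_s s) (\<lambda>x. \<lambda>i\<in>{..<s}. m + c * x i)) (\<lambda>_. ennreal (c^s))"
  unfolding lebesgue_s_def
proof (rule sym, rule product_sigma_finite.PiM_eqI[OF psf_lborel])
  show "finite {..<s}" by simp
  show "sets (density (distr (Pi\<^sub>M {..<s} (\<lambda>i. lborel)) (Pi\<^sub>M {..<s} (\<lambda>i. lborel)) (\<lambda>x. \<lambda>i\<in>{..<s}. m + c * x i)) (\<lambda>_. ennreal (c ^ s))) = sets (Pi\<^sub>M {..<s} (\<lambda>_. lborel))"
    by simp
  fix A :: "nat \<Rightarrow> real set" assume A: "\<And>i. i \<in> {..<s} \<Longrightarrow> A i \<in> sets lborel"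
  let ?T = "(\<lambda>x. \<lambda>i\<in>{..<s}. m + c * x i)"
  let ?f = "\<lambda>u. m + c * u"
  have Tm: "?T \<in> measurable (Pi\<^sub>M {..<s} (\<lambda>i. lborel)) (Pi\<^sub>M {..<s} (\<lambda>i. lborel))"
    by measurable
  have pre: "?T -` Pi\<^sub>E {..<s} A \<inter> space (Pi\<^sub>M {..<s} (\<lambda>i. lborel)) = Pi\<^sub>E {..<s} (\<lambda>i. ?f -` A i)"
    by (auto simp: space_PiM PiE_def Pi_def extensional_def)
  have Am: "?f -` A i \<in> sets borel" if "i < s" for i
  proof -
    have fm: "?f \<in> borel_measurable borel" by measurable
    then show ?thesis using measurable_sets[OF fm, of "A i"] A[of i] that by simp
  qed
  have "emeasure (density (distr (Pi\<^sub>M {..<s} (\<lambda>i. lborel)) (Pi\<^sub>M {..<s} (\<lambda>i. lborel)) ?T) (\<lambda>_. ennreal (c ^ s))) (Pi\<^sub>E {..<s} A)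
      = ennreal (c^s) * emeasure (distr (Pi\<^sub>M {..<s} (\<lambda>i. lborel)) (Pi\<^sub>M {..<s} (\<lambda>i. lborel)) ?T) (Pi\<^sub>E {..<s} A)"
    using A by (subst emeasure_density_const) auto
  also have "\<dots> = ennreal (c^s) * emeasure (Pi\<^sub>M {..<s} (\<lambda>i. lborel)) (Pi\<^sub>E {..<s} (\<lambda>i. ?f -` A i))"
    using A Tm by (subst emeasure_distr) (auto simp: pre)
  also have "\<dots> = ennreal (c^s) * (\<Prod>i<s. emeasure lborel (?f -` A i))"
    using Am by (subst product_sigma_finite.emeasure_PiM[OF psf_lborel]) auto
  also have "\<dots> = (\<Prod>i<s. ennreal c * emeasure lborel (?f -` A i))"
    using c by (simp add: prod.distrib ennreal_power)
  also have "\<dots> = (\<Prod>i<s. emeasure lborel (A i))"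
    using A c by (intro prod.cong refl lborel_pre_affine) auto
  finally show "emeasure (density (distr (Pi\<^sub>M {..<s} (\<lambda>i. lborel)) (Pi\<^sub>M {..<s} (\<lambda>i. lborel)) ?T) (\<lambda>_. ennreal (c ^ s))) (Pi\<^sub>E {..<s} A) = (\<Prod>i\<in>{..<s}. emeasure lborel (A i))" by simp
qed

lemma cv:
  fixes c m :: real assumes c: "c > 0" and g[measurable]: "g \<in> borel_measurable (lebesgue_s s)"
  shows "integral\<^sup>L (lebesgue_s s) g = c^s * (\<integral>x. g (\<lambda>i\<in>{..<s}. m + c * x i) \<partial>lebesgue_s s)"
proof -
  let ?T = "(\<lambda>x. \<lambda>i\<in>{..<s}. m + c * x i)"
  have Tm[measurable]: "?T \<in> measurable (lebesgue_s s) (lebesgue_s s)"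
    unfolding lebesgue_s_def by measurable
  have "integral\<^sup>L (lebesgue_s s) g = integral\<^sup>L (density (distr (lebesgue_s s) (lebesgue_s s) ?T) (\<lambda>_. ennreal (c^s))) g"
    using lebesgue_s_affine[OF c, of s m] by simp
  also have "\<dots> = (\<integral>x. c^s * g x \<partial>(distr (lebesgue_s s) (lebesgue_s s) ?T))"
    using c by (subst integral_density) auto
  also have "\<dots> = (\<integral>x. c^s * g (?T x) \<partial>lebesgue_s s)"
    by (subst integral_distr) auto
  finally show ?thesis by simp
qed

lemma sinh_gt_self: assumes "(x::real) > 0" shows "x < sinh x"
proof -
  have "\<exists>z>0. z < x \<and> (sinh x - x) - (sinh 0 - 0) = (x - 0) * (cosh z - 1)"
    using assms by (intro MVT2) (auto intro!: derivative_eq_intros)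
  then obtain z where z: "z > 0" "z < x" "sinh x - x = x * (cosh z - 1)" by auto
  have "cosh z > 1" using cosh_real_ge_1[of z] cosh_real_one_iff[of z] z(1) by linarith
  with z assms show ?thesis by (smt (verit) mult_pos_pos)
qed

lemma fixpoint_key:
  fixes M m :: real assumes "M > 0" "m > 0" "m = tanh (M * m)"
  shows "(1 - m^2) * M < 1"
proof -
  define u where "u = M * m"
  have u: "u > 0" using assms by (simp add: u_def)
  define S where "S = sinh u" define C where "C = cosh u"
  have C: "C \<ge> 1" using cosh_real_ge_1 by (simp add: C_def)
  have S: "S > u" using sinh_gt_self[OF u] by (simp add: S_def)
  have CS: "C^2 = S^2 + 1" by (simp add: C_def S_def cosh_square_eq)
  have m: "m = S / C" using assms(3) by (simp add: u_def[symmetric] tanh_def S_def C_def)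
  have M: "M = u / m" using assms u_def by simp
  have C0: "C \<noteq> 0" "S \<noteq> 0" using C S u by auto
  have "1 - m^2 = (C^2 - S^2) / C^2"
    using C0 by (simp add: m power_divide field_simps)
  then have m2: "1 - m^2 = 1 / C^2" using CS by simp
  have M2: "M = u * C / S" using C0 by (simp add: M m)
  have "(1 - m^2) * M = (1 / C^2) * (u * C / S)"
    by (simp only: m2 M2)
  also have "\<dots> = u / (C * S)"
    using C0 by (simp add: field_simps power2_eq_square)
  also have "\<dots> < 1" using C S u
    by (smt (verit) divide_less_eq_1 mult_less_cancel_right2 mult_pos_pos)
  finally show ?thesis .
qed

lemma mstar_props:
  fixes \<alpha> \<beta> :: real assumes M1: "\<beta> + 2 * \<alpha> > 1"
  shows "mstar \<alpha> \<beta> > 0" "mstar \<alpha> \<beta> = tanh ((\<beta> + 2 * \<alpha>) * mstar \<alpha> \<beta>)"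
    "mstar \<alpha> \<beta> < 1"
proof -
  define M where "M = \<beta> + 2 * \<alpha>"
  have M: "M > 1" using M1 by (simp add: M_def)
  define f where "f x = tanh (M * x) - x" for x
  have df: "DERIV f 0 :> M - 1" unfolding f_def
    by (auto intro!: derivative_eq_intros)
  obtain d where d: "d > 0" "\<And>h. h > 0 \<Longrightarrow> h < d \<Longrightarrow> f 0 < f (0 + h)"
    using DERIV_pos_inc_right[OF df] M by auto
  define h where "h = min (d/2) (1/2)"
  have h: "h > 0" "h < d" "h \<le> 1" using d by (auto simp: h_def)
  have fh: "f h > 0" using d(2)[OF h(1,2)] by (simp add: f_def)
  have f1: "f 1 < 0" using tanh_real_lt_1[of M] by (simp add: f_def)
  have cf: "continuous_on {h..1} f" unfolding f_def by (intro continuous_intros) auto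
  obtain x0 where x0: "h \<le> x0" "x0 \<le> 1" "f x0 = 0"
    using IVT2'[of f 1 0 h] f1 fh h cf by auto
  define S where "S = {x. x = tanh (M * x)}"
  have x0S: "x0 \<in> S" using x0 by (simp add: S_def f_def)
  have bnd: "x < 1" if "x \<in> S" for x using that tanh_real_lt_1[of "M*x"] by (simp add: S_def)
  have bdd: "bdd_above S" using bnd by (intro bdd_aboveI[of _ 1]) (auto intro: less_imp_le)
  have cl: "closed S" unfolding S_def
    by (intro closed_Collect_eq continuous_intros) auto
  have supS: "Sup S \<in> S" using closed_contains_Sup[OF _ bdd cl] x0S by auto
  have gr: "mstar \<alpha> \<beta> = Sup S"
    unfolding mstar_def M_def[symmetric]
  proof (rule Greatest_equality)
    show "Sup S = tanh (M * Sup S)" using supS by (simp add: S_def)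
    show "y \<le> Sup S" if "y = tanh (M * y)" for y
      using that bdd by (intro cSup_upper) (auto simp: S_def)
  qed
  have "x0 \<le> Sup S" using x0S bdd by (intro cSup_upper)
  then show "mstar \<alpha> \<beta> > 0" using x0 h gr by simp
  show "mstar \<alpha> \<beta> = tanh ((\<beta> + 2 * \<alpha>) * mstar \<alpha> \<beta>)" using supS gr by (simp add: S_def M_def)
  show "mstar \<alpha> \<beta> < 1" using bnd supS gr by simp
qed

definition sc :: "nat \<Rightarrow> nat \<Rightarrow> nat" where "sc s i = (i + 1) mod s"
definition pc :: "nat \<Rightarrow> nat \<Rightarrow> nat" where "pc s k = (k + s - 1) mod s"

lemma sc_lt: "1 \<le> s \<Longrightarrow> sc s i < s" by (simp add: sc_def)
lemma pc_lt: "1 \<le> s \<Longrightarrow> pc s i < s" by (simp add: pc_def)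

lemma pc_pos: assumes "0 < k" "k < s" shows "pc s k = k - 1"
proof -
  show ?thesis using assms by (cases k) (auto simp: pc_def)
qed

lemma sc_pc: assumes "1 \<le> s" "i < s" "k < s" shows "(k = sc s i) \<longleftrightarrow> (i = pc s k)"
proof (cases "i + 1 = s")
  case True
  then have "sc s i = 0" by (simp add: sc_def)
  moreover have "pc s k = s - 1 \<longleftrightarrow> k = 0"
  proof (cases "k = 0")
    case True then show ?thesis using assms by (simp add: pc_def)
  next
    case False
    then have "pc s k = k - 1" using assms by (simp add: pc_pos)
    then show ?thesis using False assms by auto
  qed
  ultimately show ?thesis using True by auto
next
  case False
  then have si: "sc s i = i + 1" using assms by (simp add: sc_def)
  show ?thesis
  proof (cases "k = 0")
    case True then show ?thesis using assms False si by (auto simp: pc_def)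
  next
    case k: False
    then have "pc s k = k - 1" using assms by (simp add: pc_pos)
    then show ?thesis using k si by auto
  qed
qed

lemma sc_bij: "1 \<le> s \<Longrightarrow> bij_betw (sc s) {..<s} {..<s}"
proof -
  assume s: "1 \<le> s"
  have "inj_on (sc s) {..<s}"
  proof (rule inj_onI)
    fix x y assume "x \<in> {..<s}" "y \<in> {..<s}" "sc s x = sc s y"
    then show "x = y" using sc_pc[OF s, of x "sc s x"] sc_pc[OF s, of y "sc s y"] sc_lt[OF s] by auto
  qed
  moreover have "sc s ` {..<s} = {..<s}"
  proof
    show "sc s ` {..<s} \<subseteq> {..<s}" using sc_lt[OF s] by auto
    show "{..<s} \<subseteq> sc s ` {..<s}"
    proof
      fix k assume k: "k \<in> {..<s}"
      then have "k = sc s (pc s k)" using sc_pc[OF s pc_lt[OF s], of k k] by auto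
      then show "k \<in> sc s ` {..<s}" using pc_lt[OF s] by auto
    qed
  qed
  ultimately show ?thesis by (simp add: bij_betw_def)
qed

lemma pc_bij: "1 \<le> s \<Longrightarrow> bij_betw (pc s) {..<s} {..<s}"
proof -
  assume s: "1 \<le> s"
  have "inj_on (pc s) {..<s}"
  proof (rule inj_onI)
    fix x y assume "x \<in> {..<s}" "y \<in> {..<s}" "pc s x = pc s y"
    then show "x = y" using sc_pc[OF s, of "pc s x" x] sc_pc[OF s, of "pc s y" y] pc_lt[OF s] by auto
  qed
  moreover have "pc s ` {..<s} = {..<s}"
  proof
    show "pc s ` {..<s} \<subseteq> {..<s}" using pc_lt[OF s] by auto
    show "{..<s} \<subseteq> pc s ` {..<s}"
    proof
      fix k assume k: "k \<in> {..<s}"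
      then have "k = pc s (sc s k)" using sc_pc[OF s, of k "sc s k"] sc_lt[OF s] by auto
      then show "k \<in> pc s ` {..<s}" using sc_lt[OF s] by auto
    qed
  qed
  ultimately show ?thesis by (simp add: bij_betw_def)
qed

lemma Amat_alt: "Amat \<alpha> \<beta> s i j = \<beta> * (if i = j then 1 else 0)
     + \<alpha> * ((if j = sc s i then 1 else 0) + (if i = sc s j then 1 else 0))"
  by (simp add: Amat_def sc_def)

lemma sum_delta_mult: "k < (s::nat) \<Longrightarrow> (\<Sum>j<s. (if j = k then 1 else 0) * (f j :: real)) = f k"
proof -
  assume "k < s"
  have "(\<Sum>j<s. (if j = k then 1 else 0) * (f j :: real)) = (\<Sum>j<s. if j = k then f j else 0)"
    by (intro sum.cong) auto
  also have "\<dots> = f k" using \<open>k < s\<close> by simp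
  finally show ?thesis .
qed

lemma sum_delta_mult': "k < (s::nat) \<Longrightarrow> (\<Sum>j<s. (if k = j then 1 else 0) * (f j :: real)) = f k"
  using sum_delta_mult[of k s f] by (simp add: eq_commute[of k])

lemma quadA:
  fixes d :: "nat \<Rightarrow> real" assumes s: "1 \<le> s"
  shows "(\<Sum>i<s. \<Sum>j<s. d i * Amat \<alpha> \<beta> s i j * d j)
       = \<beta> * (\<Sum>i<s. d i ^ 2) + 2 * \<alpha> * (\<Sum>i<s. d i * d (sc s i))"
proof -
  have "(\<Sum>i<s. \<Sum>j<s. d i * Amat \<alpha> \<beta> s i j * d j)
    = (\<Sum>i<s. \<beta> * (\<Sum>j<s. (if i = j then 1 else 0) * (d i * d j)))
      + \<alpha> * (\<Sum>i<s. \<Sum>j<s. (if j = sc s i then 1 else 0) * (d i * d j))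
      + \<alpha> * (\<Sum>i<s. \<Sum>j<s. (if i = sc s j then 1 else 0) * (d i * d j))"
    by (simp add: Amat_alt algebra_simps sum.distrib sum_distrib_left)
  also have "(\<Sum>i<s. \<Sum>j<s. (if i = sc s j then 1 else 0) * (d i * d j))
     = (\<Sum>j<s. \<Sum>i<s. (if i = sc s j then 1 else 0) * (d i * d j))"
    by (rule sum.swap)
  also have "\<dots> = (\<Sum>j<s. d (sc s j) * d j)"
    using sum_delta_mult[OF sc_lt[OF s]] by simp
  also have "(\<Sum>i<s. \<Sum>j<s. (if j = sc s i then 1 else 0) * (d i * d j)) = (\<Sum>i<s. d i * d (sc s i))"
    using sum_delta_mult[OF sc_lt[OF s]] by simp
  also have "(\<Sum>i<s. \<beta> * (\<Sum>j<s. (if i = j then 1 else 0) * (d i * d j))) = \<beta> * (\<Sum>i<s. d i ^ 2)"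
    by (simp add: sum_delta_mult' sum_distrib_left power2_eq_square)
  finally show ?thesis by (simp add: algebra_simps)
qed

lemma xAe_alt:
  fixes d :: "nat \<Rightarrow> real" assumes s: "1 \<le> s" and k: "k < s"
  shows "xAe \<alpha> \<beta> s d k = \<beta> * d k + \<alpha> * (d (pc s k) + d (sc s k))"
proof -
  have "xAe \<alpha> \<beta> s d k = \<beta> * (\<Sum>i<s. (if i = k then 1 else 0) * d i)
     + \<alpha> * (\<Sum>i<s. (if k = sc s i then 1 else 0) * d i) + \<alpha> * (\<Sum>i<s. (if i = sc s k then 1 else 0) * d i)"
    (is "_ = \<beta> * ?a + \<alpha> * ?b + \<alpha> * ?c")
    by (simp add: xAe_def Amat_alt algebra_simps sum.distrib sum_distrib_left)
  also have "(\<Sum>i<s. (if k = sc s i then 1 else 0) * d i) = (\<Sum>i<s. (if i = pc s k then 1 else 0) * d i)"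
    using sc_pc[OF s _ k] by (intro sum.cong) auto
  also have "\<dots> = d (pc s k)" by (rule sum_delta_mult[OF pc_lt[OF s]])
  also have "?a = d k" by (rule sum_delta_mult[OF k])
  also have "?c = d (sc s k)" by (rule sum_delta_mult[OF sc_lt[OF s]])
  finally show ?thesis by (simp add: algebra_simps)
qed

definition cq :: "real \<Rightarrow> real \<Rightarrow> real \<Rightarrow> real" where
  "cq \<alpha> \<beta> w0 = min ((\<beta> + 2*\<alpha>) * (1 - w0 * (\<beta> + 2*\<alpha>))) ((\<beta> - 2*\<alpha>) * (1 - w0 * (\<beta> - 2*\<alpha>)))"

lemma cq_pos: assumes "\<beta> > 2*\<alpha>" "\<alpha> > 0" "0 \<le> w0" "w0 * (\<beta> + 2*\<alpha>) < 1"
  shows "cq \<alpha> \<beta> w0 > 0"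
proof -
  have "w0 * (\<beta> - 2*\<alpha>) \<le> w0 * (\<beta> + 2*\<alpha>)" using assms by (intro mult_left_mono) auto
  then have a: "(\<beta> + 2*\<alpha>) * (1 - w0 * (\<beta> + 2*\<alpha>)) > 0" "(\<beta> - 2*\<alpha>) * (1 - w0 * (\<beta> - 2*\<alpha>)) > 0"
    using assms by (intro mult_pos_pos; linarith)+
  then show ?thesis unfolding cq_def by linarith
qed

lemma lin_min: fixes X Y e n :: real assumes "\<bar>e\<bar> \<le> n"
  shows "X * n + Y * e \<ge> min (X + Y) (X - Y) * n"
proof (cases "Y \<ge> 0")
  case True
  have "Y * (-n) \<le> Y * e" using assms True by (intro mult_left_mono) auto
  moreover have "min (X + Y) (X - Y) * n \<le> (X - Y) * n" using assms
    by (intro mult_right_mono) auto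
  ultimately show ?thesis by (simp add: algebra_simps)
next
  case False
  have "Y * n \<le> Y * e" using assms False by (intro mult_left_mono_neg) auto
  moreover have "min (X + Y) (X - Y) * n \<le> (X + Y) * n" using assms
    by (intro mult_right_mono) auto
  ultimately show ?thesis by (simp add: algebra_simps)
qed

lemma quad_ineq:
  fixes d w :: "nat \<Rightarrow> real"
  assumes s: "1 \<le> s" and ab: "\<beta> > 2*\<alpha>" "\<alpha> > 0" and w0: "0 \<le> w0"
    and w: "\<And>k. k < s \<Longrightarrow> 0 \<le> w k \<and> w k \<le> w0"
  shows "(\<Sum>i<s. \<Sum>j<s. d i * Amat \<alpha> \<beta> s i j * d j) - (\<Sum>k<s. w k * (xAe \<alpha> \<beta> s d k)^2)
     \<ge> cq \<alpha> \<beta> w0 * (\<Sum>i<s. d i ^ 2)"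
proof -
  define n where "n = (\<Sum>i<s. d i ^ 2)"
  define e where "e = (\<Sum>i<s. d i * d (sc s i))"
  have nsc: "(\<Sum>k<s. d (sc s k) ^ 2) = n"
    unfolding n_def by (rule sum.reindex_bij_betw[OF sc_bij[OF s]])
  have npc: "(\<Sum>k<s. d (pc s k) ^ 2) = n"
    unfolding n_def by (rule sum.reindex_bij_betw[OF pc_bij[OF s]])
  have epc: "(\<Sum>k<s. d k * d (pc s k)) = e"
  proof -
    have "(\<Sum>k<s. d k * d (pc s k)) = (\<Sum>j<s. d (sc s j) * d (pc s (sc s j)))"
      by (rule sum.reindex_bij_betw[OF sc_bij[OF s], symmetric])
    also have "\<dots> = e" unfolding e_def
    proof (intro sum.cong refl)
      fix j assume "j \<in> {..<s}"
      then have "pc s (sc s j) = j" using sc_pc[OF s _ sc_lt[OF s], of j j] by auto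
      then show "d (sc s j) * d (pc s (sc s j)) = d j * d (sc s j)" by simp
    qed
    finally show ?thesis .
  qed
  have en: "\<bar>e\<bar> \<le> n"
  proof -
    have "\<bar>e\<bar> \<le> (\<Sum>i<s. \<bar>d i * d (sc s i)\<bar>)" unfolding e_def by (rule sum_abs)
    also have "\<dots> \<le> (\<Sum>i<s. (d i ^ 2 + d (sc s i) ^ 2) / 2)"
    proof (intro sum_mono)
      fix i
      have "0 \<le> (\<bar>d i\<bar> - \<bar>d (sc s i)\<bar>)^2" by simp
      then show "\<bar>d i * d (sc s i)\<bar> \<le> (d i ^ 2 + d (sc s i) ^ 2) / 2"
        by (simp add: power2_eq_square abs_mult algebra_simps)
    qed
    also have "\<dots> = n" using nsc by (simp add: sum.distrib n_def sum_divide_distrib[symmetric])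
    finally show ?thesis .
  qed
  have n0: "n \<ge> 0" unfolding n_def by (intro sum_nonneg) auto
  have p: "(\<Sum>i<s. \<Sum>j<s. d i * Amat \<alpha> \<beta> s i j * d j) = \<beta> * n + 2 * \<alpha> * e"
    unfolding n_def e_def by (rule quadA[OF s])
  have q: "(\<Sum>k<s. (xAe \<alpha> \<beta> s d k)^2) \<le> \<beta>^2 * n + 4 * \<alpha> * \<beta> * e + 4 * \<alpha>^2 * n"
  proof -
    have "(\<Sum>k<s. (xAe \<alpha> \<beta> s d k)^2) \<le> (\<Sum>k<s. \<beta>^2 * d k ^ 2 + 2*\<alpha>*\<beta> * (d k * d (pc s k)) + 2*\<alpha>*\<beta> * (d k * d (sc s k))
         + 2*\<alpha>^2 * d (pc s k) ^ 2 + 2*\<alpha>^2 * d (sc s k)^2)"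
    proof (intro sum_mono)
      fix k assume "k \<in> {..<s}"
      then have xk: "xAe \<alpha> \<beta> s d k = \<beta> * d k + \<alpha> * (d (pc s k) + d (sc s k))" using xAe_alt[OF s] by auto
      have "0 \<le> \<alpha>^2 * (d (pc s k) - d (sc s k))^2" by simp
      then show "(xAe \<alpha> \<beta> s d k)^2 \<le> \<beta>^2 * d k ^ 2 + 2*\<alpha>*\<beta> * (d k * d (pc s k)) + 2*\<alpha>*\<beta> * (d k * d (sc s k))
         + 2*\<alpha>^2 * d (pc s k) ^ 2 + 2*\<alpha>^2 * d (sc s k)^2"
        unfolding xk by (simp add: power2_eq_square algebra_simps)
    qed
    also have "\<dots> = \<beta>^2 * n + 2*\<alpha>*\<beta> * e + 2*\<alpha>*\<beta> * e + 2*\<alpha>^2 * n + 2*\<alpha>^2 * n"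
      using npc nsc epc by (simp add: sum.distrib sum_distrib_left[symmetric] n_def e_def)
    finally show ?thesis by (simp add: algebra_simps)
  qed
  have wq: "(\<Sum>k<s. w k * (xAe \<alpha> \<beta> s d k)^2) \<le> w0 * (\<Sum>k<s. (xAe \<alpha> \<beta> s d k)^2)"
    unfolding sum_distrib_left using w by (intro sum_mono mult_right_mono) auto
  have "w0 * (\<Sum>k<s. (xAe \<alpha> \<beta> s d k)^2) \<le> w0 * (\<beta>^2 * n + 4 * \<alpha> * \<beta> * e + 4 * \<alpha>^2 * n)"
    using q w0 by (rule mult_left_mono)
  then have "(\<Sum>i<s. \<Sum>j<s. d i * Amat \<alpha> \<beta> s i j * d j) - (\<Sum>k<s. w k * (xAe \<alpha> \<beta> s d k)^2)
      \<ge> (\<beta> - w0 * (\<beta>^2 + 4*\<alpha>^2)) * n + (2*\<alpha> * (1 - 2 * w0 * \<beta>)) * e"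
    using wq p by (simp add: algebra_simps)
  moreover have "(\<beta> - w0 * (\<beta>^2 + 4*\<alpha>^2)) * n + (2*\<alpha> * (1 - 2 * w0 * \<beta>)) * e \<ge> cq \<alpha> \<beta> w0 * n"
  proof -
    have "cq \<alpha> \<beta> w0 = min ((\<beta> - w0 * (\<beta>^2 + 4*\<alpha>^2)) + (2*\<alpha> * (1 - 2 * w0 * \<beta>)))
                      ((\<beta> - w0 * (\<beta>^2 + 4*\<alpha>^2)) - (2*\<alpha> * (1 - 2 * w0 * \<beta>)))"
      unfolding cq_def by (simp add: algebra_simps power2_eq_square)
    then show ?thesis using lin_min[OF en] by simp
  qed
  ultimately show ?thesis unfolding n_def by linarith
qed

lemma convex_1d:
  fixes G G1 G2 :: "real \<Rightarrow> real"
  assumes "\<And>u. DERIV G u :> G1 u" "\<And>u. DERIV G1 u :> G2 u" "\<And>u. u \<in> {0..1} \<Longrightarrow> G2 u \<ge> 0"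
    and u: "0 \<le> u" "u \<le> 1"
  shows "G u \<le> u * G 1 + (1 - u) * G 0"
proof -
  have "convex_on {0..1} G"
    by (rule f''_ge0_imp_convex[of "{0..1}" G G1 G2]) (use assms in auto)
  from convex_onD[OF this, of u 0 1] u show ?thesis by (simp add: algebra_simps)
qed

lemma xAe_lin: "xAe \<alpha> \<beta> s (\<lambda>i. y0 i + u * d i) k = xAe \<alpha> \<beta> s y0 k + u * xAe \<alpha> \<beta> s d k"
  by (simp add: xAe_def sum.distrib sum_distrib_left algebra_simps)

lemma phiN_line:
  "phiN \<alpha> \<beta> s (\<lambda>i. y0 i + u * d i) =
    (1/2) * ((\<Sum>i<s. \<Sum>j<s. y0 i * Amat \<alpha> \<beta> s i j * y0 j)
      + u * (\<Sum>i<s. \<Sum>j<s. (d i * Amat \<alpha> \<beta> s i j * y0 j + y0 i * Amat \<alpha> \<beta> s i j * d j))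
      + u^2 * (\<Sum>i<s. \<Sum>j<s. d i * Amat \<alpha> \<beta> s i j * d j))
    - (\<Sum>k<s. ln (cosh (xAe \<alpha> \<beta> s y0 k + u * xAe \<alpha> \<beta> s d k)))"
  unfolding phiN_def xAe_lin
  by (simp add: sum.distrib sum_distrib_left algebra_simps power2_eq_square)

lemma ln_cosh_deriv: "((\<lambda>u. ln (cosh (a + u * v))) has_real_derivative tanh (a + u * v) * v) (at u)"
  by (auto intro!: derivative_eq_intros simp: tanh_def field_simps)

lemma tanh_deriv': "((\<lambda>u. tanh (a + u * v)) has_real_derivative (1 - tanh (a + u * v)^2) * v) (at u)"
  by (auto intro!: derivative_eq_intros)

lemma phiN_seg:
  fixes y0 d :: "nat \<Rightarrow> real"
  assumes s: "1 \<le> s" and ab: "\<beta> > 2*\<alpha>" "\<alpha> > 0" and w0: "0 \<le> w0"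
    and H: "\<And>u k. u \<in> {0..1} \<Longrightarrow> k < s \<Longrightarrow> 1 - tanh (xAe \<alpha> \<beta> s (\<lambda>i. y0 i + u * d i) k)^2 \<le> w0"
    and u: "0 \<le> u" "u \<le> 1"
  shows "phiN \<alpha> \<beta> s (\<lambda>i. y0 i + u * d i) \<le> u * phiN \<alpha> \<beta> s (\<lambda>i. y0 i + 1 * d i)
      + (1 - u) * phiN \<alpha> \<beta> s (\<lambda>i. y0 i + 0 * d i) - cq \<alpha> \<beta> w0 / 2 * (\<Sum>i<s. d i ^ 2) * (u * (1 - u))"
proof -
  define a where "a = (\<Sum>i<s. \<Sum>j<s. y0 i * Amat \<alpha> \<beta> s i j * y0 j)"
  define b where "b = (\<Sum>i<s. \<Sum>j<s. (d i * Amat \<alpha> \<beta> s i j * y0 j + y0 i * Amat \<alpha> \<beta> s i j * d j))"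
  define c where "c = (\<Sum>i<s. \<Sum>j<s. d i * Amat \<alpha> \<beta> s i j * d j)"
  define x where "x k = xAe \<alpha> \<beta> s y0 k" for k
  define v where "v k = xAe \<alpha> \<beta> s d k" for k
  define n where "n = (\<Sum>i<s. d i ^ 2)"
  define C where "C = cq \<alpha> \<beta> w0"
  define G where "G u = (1/2) * (a + u * b + u^2 * c) - (\<Sum>k<s. ln (cosh (x k + u * v k))) - C/2 * n * u^2" for u
  define G1 where "G1 u = (1/2) * (b + 2 * u * c) - (\<Sum>k<s. tanh (x k + u * v k) * v k) - C * n * u" for u
  define G2 where "G2 u = c - (\<Sum>k<s. (1 - tanh (x k + u * v k)^2) * v k ^ 2) - C * n" for u
  have phi: "phiN \<alpha> \<beta> s (\<lambda>i. y0 i + u * d i) = G u + C/2 * n * u^2" for u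
    unfolding G_def phiN_line a_def b_def c_def x_def v_def by simp
  have d1: "DERIV G u :> G1 u" for u
    unfolding G_def G1_def
    by (auto intro!: derivative_eq_intros DERIV_sum ln_cosh_deriv simp: algebra_simps power2_eq_square tanh_def)
  have d2: "DERIV G1 u :> G2 u" for u
    unfolding G1_def G2_def
    by (auto intro!: derivative_eq_intros DERIV_sum tanh_deriv' simp: algebra_simps power2_eq_square)
  have g2: "G2 u \<ge> 0" if "u \<in> {0..1}" for u
  proof -
    have "c - (\<Sum>k<s. (1 - tanh (x k + u * v k)^2) * v k ^ 2) \<ge> C * n"
      unfolding c_def v_def C_def n_def x_def
    proof (rule quad_ineq[OF s ab w0])
      fix k assume k: "k < s"
      have "tanh (x k + u * v k)^2 \<le> 1"
        using tanh_real_bounds[of "x k + u * v k"] by (simp add: abs_square_le_1 abs_le_iff)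
      moreover have "1 - tanh (x k + u * v k)^2 \<le> w0"
        using H[OF that k] by (simp add: xAe_lin x_def v_def)
      ultimately show "0 \<le> 1 - tanh (xAe \<alpha> \<beta> s y0 k + u * xAe \<alpha> \<beta> s d k)^2 \<and> 1 - tanh (xAe \<alpha> \<beta> s y0 k + u * xAe \<alpha> \<beta> s d k)^2 \<le> w0"
        by (simp add: x_def v_def)
    qed
    then show ?thesis unfolding G2_def by simp
  qed
  have "G u \<le> u * G 1 + (1 - u) * G 0"
    by (rule convex_1d[OF d1 d2 g2 u])
  then show ?thesis unfolding phi C_def[symmetric] n_def[symmetric]
    by (simp add: algebra_simps power2_eq_square diff_divide_distrib)
qed

lemma Amat_nonneg: "0 \<le> \<alpha> \<Longrightarrow> 0 \<le> \<beta> \<Longrightarrow> 0 \<le> Amat \<alpha> \<beta> s i j"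
  by (simp add: Amat_def)

lemma xAe_one: "1 \<le> s \<Longrightarrow> k < s \<Longrightarrow> xAe \<alpha> \<beta> s (\<lambda>_. 1) k = \<beta> + 2 * \<alpha>"
  by (simp add: xAe_alt)

lemma xAe_const: "1 \<le> s \<Longrightarrow> k < s \<Longrightarrow> xAe \<alpha> \<beta> s (\<lambda>_. c) k = c * (\<beta> + 2 * \<alpha>)"
  by (simp add: xAe_alt algebra_simps)

lemma xAe_lower:
  assumes s: "1 \<le> s" "k < s" and ab: "0 \<le> \<alpha>" "0 \<le> \<beta>" and y: "\<And>i. i < s \<Longrightarrow> y i \<ge> c"
  shows "xAe \<alpha> \<beta> s y k \<ge> c * (\<beta> + 2 * \<alpha>)"
proof -
  have "xAe \<alpha> \<beta> s (\<lambda>_. c) k \<le> xAe \<alpha> \<beta> s y k"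
    unfolding xAe_def using y Amat_nonneg[OF ab] by (intro sum_mono mult_right_mono) auto
  then show ?thesis using xAe_const[OF s] by simp
qed

lemma xAe_abs:
  assumes s: "1 \<le> s" "k < s" and ab: "0 \<le> \<alpha>" "0 \<le> \<beta>" and y: "\<And>i. i < s \<Longrightarrow> \<bar>y i\<bar> \<le> B"
  shows "\<bar>xAe \<alpha> \<beta> s y k\<bar> \<le> B * (\<beta> + 2 * \<alpha>)"
proof -
  have "\<bar>xAe \<alpha> \<beta> s y k\<bar> \<le> (\<Sum>i<s. \<bar>y i * Amat \<alpha> \<beta> s i k\<bar>)" unfolding xAe_def by (rule sum_abs)
  also have "\<dots> \<le> xAe \<alpha> \<beta> s (\<lambda>_. B) k"
    unfolding xAe_def using y Amat_nonneg[OF ab] by (intro sum_mono) (auto simp: abs_mult intro: mult_right_mono)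
  finally show ?thesis using xAe_const[OF s] by simp
qed

lemma phiN_cong: "(\<And>i. i < s \<Longrightarrow> x i = y i) \<Longrightarrow> phiN \<alpha> \<beta> s x = phiN \<alpha> \<beta> s y"
  unfolding phiN_def xAe_def by (intro arg_cong2[where f="(-)"] arg_cong[where f="\<lambda>a. 1/2 * a"] sum.cong refl) auto

lemma ln_cosh_le: "ln (cosh (a::real)) \<le> \<bar>a\<bar>"
proof -
  have e: "exp (-a) \<le> exp \<bar>a\<bar>" "exp a \<le> exp \<bar>a\<bar>" by auto
  have c: "cosh a = (exp a + exp (-a)) / 2" by (simp add: cosh_def)
  have "exp a + exp (-a) \<le> exp \<bar>a\<bar> + exp \<bar>a\<bar>" by (rule add_mono[OF e(2) e(1)])
  then have "cosh a \<le> exp \<bar>a\<bar>" unfolding c by simp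
  then have "ln (cosh a) \<le> ln (exp \<bar>a\<bar>)" using cosh_real_pos[of a] by (subst ln_le_cancel_iff) auto
  then show ?thesis by simp
qed

lemma quad_nonneg:
  assumes s: "1 \<le> s" and ab: "\<beta> > 2*\<alpha>" "\<alpha> > 0"
  shows "(\<Sum>i<s. \<Sum>j<s. y i * Amat \<alpha> \<beta> s i j * y j) \<ge> 0"
proof -
  have "(\<Sum>i<s. \<Sum>j<s. y i * Amat \<alpha> \<beta> s i j * y j) - (\<Sum>k<s. 0 * (xAe \<alpha> \<beta> s y k)^2)
     \<ge> cq \<alpha> \<beta> 0 * (\<Sum>i<s. y i ^ 2)"
    using quad_ineq[OF s ab, of 0 "\<lambda>_. 0" y] by simp
  moreover have "cq \<alpha> \<beta> 0 > 0" using cq_pos[OF ab, of 0] by simp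
  moreover have "(\<Sum>i<s. y i ^ 2) \<ge> 0" by (intro sum_nonneg) auto
  ultimately have "0 \<le> cq \<alpha> \<beta> 0 * (\<Sum>i<s. y i ^ 2)" "cq \<alpha> \<beta> 0 * (\<Sum>i<s. y i ^ 2) \<le> (\<Sum>i<s. \<Sum>j<s. y i * Amat \<alpha> \<beta> s i j * y j)"
    by simp_all
  then show ?thesis by linarith
qed

lemma phiN_lower:
  assumes s: "1 \<le> s" and ab: "\<beta> > 2*\<alpha>" "\<alpha> > 0" and y: "\<And>i. i < s \<Longrightarrow> \<bar>y i\<bar> \<le> B"
  shows "phiN \<alpha> \<beta> s y \<ge> - (real s * (B * (\<beta> + 2 * \<alpha>)))"
proof -
  have "(\<Sum>k<s. ln (cosh (xAe \<alpha> \<beta> s y k))) \<le> (\<Sum>k<(s::nat). B * (\<beta> + 2 * \<alpha>))"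
  proof (intro sum_mono)
    fix k assume k: "k \<in> {..<s}"
    have "\<bar>xAe \<alpha> \<beta> s y k\<bar> \<le> B*(\<beta>+2*\<alpha>)" using ab k y by (intro xAe_abs[OF s]) auto
    then show "ln (cosh (xAe \<alpha> \<beta> s y k)) \<le> B * (\<beta> + 2 * \<alpha>)"
      using ln_cosh_le[of "xAe \<alpha> \<beta> s y k"] by linarith
  qed
  then show ?thesis using quad_nonneg[OF s ab, of y] unfolding phiN_def by simp
qed

lemma weights:
  fixes \<alpha> \<beta> :: real
  assumes s: "1 \<le> s" and ab: "\<beta> > 2 * \<alpha>" "2 * \<alpha> > 0" "\<beta> + 2 * \<alpha> > 1"
  shows "\<exists>r0 w0. 0 < r0 \<and> r0 < mstar \<alpha> \<beta> \<and> 0 \<le> w0 \<and> w0 * (\<beta> + 2 * \<alpha>) < 1 \<and>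
    (\<forall>y k. (\<forall>i<s. \<bar>y i - mstar \<alpha> \<beta>\<bar> \<le> r0) \<longrightarrow> k < s \<longrightarrow> 1 - tanh (xAe \<alpha> \<beta> s y k)^2 \<le> w0)"
proof -
  define m where "m = mstar \<alpha> \<beta>"
  define M where "M = \<beta> + 2 * \<alpha>"
  have m: "m > 0" "m = tanh (M * m)" using mstar_props[OF ab(3)] by (auto simp: m_def M_def)
  have M: "M > 1" using ab by (simp add: M_def)
  define h where "h r = (1 - tanh (M * (m - r))^2) * M" for r
  have "h 0 < 1" using fixpoint_key[of M m] m M by (simp add: h_def)
  moreover have "isCont h 0" unfolding h_def by (intro continuous_intros) auto
  ultimately have "\<forall>\<^sub>F r in at 0. h r < 1"
    unfolding isCont_def by (intro order_tendstoD(2)) auto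
  then obtain \<delta> where \<delta>: "\<delta> > 0" "\<And>r. r \<noteq> 0 \<Longrightarrow> dist r 0 < \<delta> \<Longrightarrow> h r < 1"
    unfolding eventually_at by auto
  define r0 where "r0 = min (\<delta>/2) (m/2)"
  have r0: "0 < r0" "r0 < m" "r0 < \<delta>" "r0 \<le> m/2" using \<delta> m by (auto simp: r0_def)
  define w0 where "w0 = 1 - tanh (M * (m - r0))^2"
  have hr0: "h r0 < 1" using \<delta>(2)[of r0] r0 by simp
  have t01: "tanh (M * (m - r0))^2 \<le> 1"
    using tanh_real_bounds[of "M * (m - r0)"] by (simp add: abs_square_le_1 abs_le_iff)
  have pos: "M * (m - r0) > 0" using M r0 by simp
  show ?thesis
  proof (intro exI conjI allI impI)
    show "0 < r0" "r0 < mstar \<alpha> \<beta>" using r0 by (auto simp: m_def)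
    show "0 \<le> w0" using t01 by (simp add: w0_def)
    show "w0 * (\<beta> + 2 * \<alpha>) < 1" using hr0 by (simp add: h_def w0_def M_def)
    fix y k assume y: "\<forall>i<s. \<bar>y i - mstar \<alpha> \<beta>\<bar> \<le> r0" and k: "k < s"
    have "xAe \<alpha> \<beta> s y k \<ge> (m - r0) * M"
      unfolding M_def using y ab by (intro xAe_lower[OF s k]) (auto simp: m_def abs_le_iff)
    then have "tanh (M * (m - r0)) \<le> tanh (xAe \<alpha> \<beta> s y k)" by (simp add: mult.commute)
    moreover have "0 \<le> tanh (M * (m - r0))" using pos by simp
    ultimately have "tanh (M * (m - r0))^2 \<le> tanh (xAe \<alpha> \<beta> s y k)^2"
      by (intro power_mono) auto
    then show "1 - tanh (xAe \<alpha> \<beta> s y k)^2 \<le> w0" by (simp add: w0_def)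
  qed
qed

lemma space_leb: "space (lebesgue_s s) = (\<Pi>\<^sub>E i\<in>{..<s}. UNIV)"
  by (simp add: lebesgue_s_def space_PiM)

lemma comp_meas[measurable]: "(\<lambda>x. x i) \<in> borel_measurable (lebesgue_s s)"
proof (cases "i < s")
  case True
  then show ?thesis unfolding lebesgue_s_def
    using measurable_component_singleton[of i "{..<s}" "\<lambda>_. lborel"] by simp
next
  case False
  have e: "\<And>x. x \<in> space (lebesgue_s s) \<Longrightarrow> x i = undefined"
    using False by (auto simp: space_leb PiE_def extensional_def)
  show ?thesis
    by (subst measurable_cong[where g="\<lambda>x. undefined"]) (use e in auto)
qed

lemma cosh_meas[measurable]: "(cosh :: real \<Rightarrow> real) \<in> borel_measurable borel"
  by (intro borel_measurable_continuous_onI continuous_intros)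

lemma phiN_meas[measurable]:
  assumes [measurable]: "\<And>i. (\<lambda>x. f x i) \<in> borel_measurable M"
  shows "(\<lambda>x. phiN \<alpha> \<beta> s (f x)) \<in> borel_measurable M"
  unfolding phiN_def xAe_def by measurable

lemma inner_meas[measurable]:
  assumes [measurable]: "\<And>i. (\<lambda>x. f x i) \<in> borel_measurable M"
  shows "(\<lambda>x. inner_s s t (f x)) \<in> borel_measurable M"
  unfolding inner_s_def by measurable

lemma cube_sets[measurable]: "cube s c r \<in> sets (lebesgue_s s)"
  unfolding cube_def lebesgue_s_def by (rule sets_PiM_I_finite) auto

lemma emeasure_cube: "0 \<le> r \<Longrightarrow> emeasure (lebesgue_s s) (cube s c r) = ennreal ((2 * r) ^ s)"
  unfolding cube_def lebesgue_s_def
  by (subst product_sigma_finite.emeasure_PiM[OF psf_lborel]) (auto simp: ennreal_power prod_constant)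

lemma integrable_cube:
  fixes f :: "(nat \<Rightarrow> real) \<Rightarrow> real"
  assumes [measurable]: "f \<in> borel_measurable (lebesgue_s s)" and r: "0 \<le> r"
    and z: "\<And>x. x \<notin> cube s c r \<Longrightarrow> f x = 0" and b: "\<And>x. x \<in> cube s c r \<Longrightarrow> \<bar>f x\<bar> \<le> B"
  shows "integrable (lebesgue_s s) f"
proof (rule integrableI_bounded_set[where A = "cube s c r" and B = B])
  show "emeasure (lebesgue_s s) (cube s c r) < \<infinity>" using emeasure_cube[OF r] by simp
qed (use z b in auto)

lemma rho_meas[measurable]: "rho_un \<alpha> \<beta> N s r \<in> borel_measurable (lebesgue_s s)"
  unfolding rho_un_def by measurable

lemma comb_bound:
  fixes a b u R :: real
  assumes "\<bar>a\<bar> \<le> R" "\<bar>b\<bar> \<le> R" "0 \<le> u" "u \<le> 1"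
  shows "\<bar>u * a + (1 - u) * b\<bar> \<le> R"
proof -
  have "\<bar>u * a + (1 - u) * b\<bar> \<le> \<bar>u * a\<bar> + \<bar>(1 - u) * b\<bar>" by (rule abs_triangle_ineq)
  also have "\<dots> = u * \<bar>a\<bar> + (1 - u) * \<bar>b\<bar>" using assms by (simp add: abs_mult)
  also have "\<dots> \<le> u * R + (1 - u) * R" using assms by (intro add_mono mult_left_mono) auto
  finally show ?thesis by (simp add: algebra_simps)
qed

lemma sq_comb:
  fixes x y :: "nat \<Rightarrow> real"
  shows "(\<Sum>i<s. (u * x i + (1-u) * y i)^2) = u * (\<Sum>i<s. x i^2) + (1-u) * (\<Sum>i<s. y i^2) - u*(1-u) * (\<Sum>i<s. (x i - y i)^2)"
proof -
  have "\<And>i. (u * x i + (1-u) * y i)^2 = u * x i^2 + (1-u) * y i^2 - u*(1-u) * (x i - y i)^2"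
    by (simp add: power2_eq_square algebra_simps)
  then show ?thesis by (simp add: sum.distrib sum_subtractf sum_distrib_left)
qed

lemma cube_mem: "x \<in> cube s c R \<longleftrightarrow> x \<in> (\<Pi>\<^sub>E i\<in>{..<s}. UNIV) \<and> (\<forall>i<s. \<bar>x i - c\<bar> \<le> R)"
  by (auto simp: cube_def PiE_def Pi_def abs_le_iff)

theorem lemma7p1:
  fixes \<alpha> \<beta> :: real and s :: nat
  assumes "\<beta> > 2 * \<alpha>" and "2 * \<alpha> > 0" and "\<beta> + 2 * \<alpha> > 1" and "s \<ge> 1"
  shows "\<exists>r0>0. \<forall>N::nat. \<forall>t::nat \<Rightarrow> real. \<forall>r. N \<ge> 1 \<and> 0 < r \<and> r < r0 \<longrightarrow>
    (let Z = (\<integral>x. rho_un \<alpha> \<beta> N s r x \<partial>lebesgue_s s);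
         \<rho> = (\<lambda>x. rho_un \<alpha> \<beta> N s r x / Z)
     in strongly_log_concave_density s \<rho> \<and>
        JN \<alpha> \<beta> N s t r / JN \<alpha> \<beta> N s (\<lambda>_. 0) r
          = (\<integral>x. exp (inner_s s t x) * \<rho> x \<partial>lebesgue_s s))"
proof -
  have s: "1 \<le> s" and ab: "\<beta> > 2*\<alpha>" "\<alpha> > 0" and M1: "\<beta> + 2 * \<alpha> > 1" using assms by auto
  define m where "m = mstar \<alpha> \<beta>"
  define M where "M = \<beta> + 2*\<alpha>"
  have mp: "m > 0" using mstar_props(1)[OF M1] by (simp add: m_def)
  have Mp: "M > 0" using ab by (simp add: M_def)
  obtain r0 w0 where r0: "0 < r0" "r0 < m" "0 \<le> w0" "w0 * M < 1"
    and W: "\<And>y k. \<forall>i<s. \<bar>y i - m\<bar> \<le> r0 \<Longrightarrow> k < s \<Longrightarrow> 1 - tanh (xAe \<alpha> \<beta> s y k)^2 \<le> w0"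
    using weights[OF s assms(1,2,3)] unfolding m_def[symmetric] M_def[symmetric] by blast
  define c where "c = cq \<alpha> \<beta> w0"
  have c: "c > 0" using cq_pos[OF ab r0(3)] r0(4) by (simp add: c_def M_def)
  show ?thesis
  proof (rule exI[of _ r0], intro conjI allI impI)
    show "0 < r0" by fact
    fix N :: nat and t :: "nat \<Rightarrow> real" and r :: real
    assume H: "1 \<le> N \<and> 0 < r \<and> r < r0"
    then have N: "1 \<le> N" and r: "0 < r" "r < r0" by auto
    define \<sigma> where "\<sigma> = sqrt (real s / real N)"
    define \<tau> where "\<tau> = sqrt (real N / real s)"
    define R where "R = \<tau> * r"
    define A where "A = real N / real s"
    have A: "A > 0" using s N by (simp add: A_def)
    have \<sigma>: "\<sigma> > 0" and \<tau>: "\<tau> > 0" using s N by (auto simp: \<sigma>_def \<tau>_def)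
    have \<sigma>\<tau>: "\<sigma> * \<tau> = 1" using s N by (simp add: \<sigma>_def \<tau>_def real_sqrt_mult[symmetric])
    have A\<sigma>: "A * \<sigma>^2 = 1" using s N by (simp add: \<sigma>_def A_def)
    have R: "R > 0" "\<sigma> * R = r" using \<sigma>\<tau> \<tau> r by (auto simp: R_def mult.assoc[symmetric])
    define mv where "mv = mvec \<alpha> \<beta> s"
    have mv: "\<And>i. i < s \<Longrightarrow> mv i = m" by (simp add: mv_def mvec_def m_def)
    define P0 where "P0 = phiN \<alpha> \<beta> s mv"
    define \<Phi> where "\<Phi> x = phiN \<alpha> \<beta> s (\<lambda>i. mv i + \<sigma> * x i)" for x
    have rho: "rho_un \<alpha> \<beta> N s r x = indicator (cube s 0 R) x * exp (- A * (\<Phi> x - P0))" for x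
      unfolding rho_un_def \<Phi>_def mv_def \<sigma>_def R_def \<tau>_def A_def P0_def by simp
    have \<Phi>low: "\<Phi> x \<ge> - (real s * ((m + r) * M))" if "x \<in> cube s 0 R" for x
    proof -
      have "\<bar>mv i + \<sigma> * x i\<bar> \<le> m + r" if i: "i < s" for i
      proof -
        have "\<bar>x i\<bar> \<le> R" using \<open>x \<in> cube s 0 R\<close> i by (simp add: cube_mem)
        then have "\<sigma> * \<bar>x i\<bar> \<le> \<sigma> * R" using \<sigma> by (intro mult_left_mono) auto
        then have v: "\<bar>\<sigma> * x i\<bar> \<le> r" using R(2) \<sigma> by (simp add: abs_mult)
        show ?thesis using mv[OF i] mp abs_triangle_ineq[of m "\<sigma> * x i"] v by simp
      qed
      then show ?thesis unfolding \<Phi>_def M_def by (intro phiN_lower[OF s ab])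
    qed
    define K where "K = A * (real s * ((m + r) * M) + P0)"
    have rho_bd: "0 \<le> rho_un \<alpha> \<beta> N s r x \<and> rho_un \<alpha> \<beta> N s r x \<le> exp K" for x
    proof (cases "x \<in> cube s 0 R")
      case True
      have "- A * (\<Phi> x - P0) \<le> K"
      proof -
        have "A * (- \<Phi> x) \<le> A * (real s * ((m + r) * M))"
          using \<Phi>low[OF True] A by (intro mult_left_mono) auto
        then show ?thesis by (simp add: K_def algebra_simps)
      qed
      then show ?thesis using True by (simp add: rho)
    qed (simp add: rho)
    have int_rho: "integrable (lebesgue_s s) (rho_un \<alpha> \<beta> N s r)"
    proof (rule integrable_cube[where c=0 and r=R and B="exp K"])
      show "0 \<le> R" using R by simp
      show "rho_un \<alpha> \<beta> N s r \<in> borel_measurable (lebesgue_s s)" by measurable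
      show "rho_un \<alpha> \<beta> N s r x = 0" if "x \<notin> cube s 0 R" for x using that by (simp add: rho)
      show "\<bar>rho_un \<alpha> \<beta> N s r x\<bar> \<le> exp K" for x using rho_bd[of x] by simp
    qed
    define T where "T = (\<Sum>i<s. \<bar>t i\<bar> * R)"
    have int_exp: "integrable (lebesgue_s s) (\<lambda>x. exp (inner_s s t x) * rho_un \<alpha> \<beta> N s r x)"
    proof (rule integrable_cube[where c=0 and r=R and B="exp T * exp K"])
      show "0 \<le> R" using R by simp
      show "(\<lambda>x. exp (inner_s s t x) * rho_un \<alpha> \<beta> N s r x) \<in> borel_measurable (lebesgue_s s)" by measurable
      show "exp (inner_s s t x) * rho_un \<alpha> \<beta> N s r x = 0" if "x \<notin> cube s 0 R" for x
        using that by (simp add: rho)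
      show "\<bar>exp (inner_s s t x) * rho_un \<alpha> \<beta> N s r x\<bar> \<le> exp T * exp K" if x: "x \<in> cube s 0 R" for x
      proof -
        have "inner_s s t x \<le> T" unfolding inner_s_def T_def
        proof (rule sum_mono)
          fix i assume "i \<in> {..<s}"
          then have "\<bar>x i\<bar> \<le> R" using x by (simp add: cube_mem)
          then have "\<bar>t i\<bar> * \<bar>x i\<bar> \<le> \<bar>t i\<bar> * R" by (intro mult_left_mono) auto
          moreover have "t i * x i \<le> \<bar>t i * x i\<bar>" by (rule abs_ge_self)
          ultimately show "t i * x i \<le> \<bar>t i\<bar> * R" by (simp add: abs_mult)
        qed
        then have "exp (inner_s s t x) \<le> exp T" by simp
        then have "exp (inner_s s t x) * rho_un \<alpha> \<beta> N s r x \<le> exp T * exp K"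
          using rho_bd[of x] by (intro mult_mono) auto
        then show ?thesis using rho_bd[of x] by simp
      qed
    qed
    define Z where "Z = (\<integral>x. rho_un \<alpha> \<beta> N s r x \<partial>lebesgue_s s)"
    have Z: "Z > 0"
    proof -
      have Z0: "Z \<ge> 0" unfolding Z_def using rho_bd by (intro integral_nonneg_AE) auto
      have "Z \<noteq> 0"
      proof
        assume "Z = 0"
        then have "AE x in lebesgue_s s. rho_un \<alpha> \<beta> N s r x = 0"
          using integral_nonneg_eq_0_iff_AE[OF int_rho] rho_bd unfolding Z_def by auto
        then have ae: "AE x in lebesgue_s s. x \<notin> cube s 0 R"
          by eventually_elim (auto simp: rho indicator_def)
        have eqs: "{x \<in> space (lebesgue_s s). \<not> x \<notin> cube s 0 R} = cube s 0 R"
          using sets.sets_into_space[OF cube_sets[of s 0 R]] by auto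
        have "emeasure (lebesgue_s s) (cube s 0 R) = 0"
          using AE_iff_measurable[OF cube_sets eqs] ae by simp
        then show False using emeasure_cube[of R s 0] R by simp
      qed
      then show ?thesis using Z0 by simp
    qed
    have JN: "JN \<alpha> \<beta> N s t' r = (\<integral>x. exp (inner_s s t' x) * rho_un \<alpha> \<beta> N s r x \<partial>lebesgue_s s)" for t'
    proof -
      define g where "g y = indicator (cube s m r) y * exp (- A * phiN \<alpha> \<beta> s y + \<tau> * inner_s s t' y)" for y
      define E where "E = exp (A * P0 - \<tau> * inner_s s t' mv)"
      have gm: "g \<in> borel_measurable (lebesgue_s s)" unfolding g_def by measurable
      have JN1: "JN \<alpha> \<beta> N s t' r = A powr (real s / 2) * E * integral\<^sup>L (lebesgue_s s) g"
        unfolding JN_def g_def E_def A_def \<tau>_def P0_def mv_def m_def by simp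
      have cvg: "integral\<^sup>L (lebesgue_s s) g = \<sigma>^s * (\<integral>x. g (\<lambda>i\<in>{..<s}. m + \<sigma> * x i) \<partial>lebesgue_s s)"
        by (rule cv[OF \<sigma> gm])
      have pw: "E * g (\<lambda>i\<in>{..<s}. m + \<sigma> * x i) = exp (inner_s s t' x) * rho_un \<alpha> \<beta> N s r x"
        if x: "x \<in> space (lebesgue_s s)" for x
      proof -
        define Tx where "Tx = (\<lambda>i\<in>{..<s}. m + \<sigma> * x i)"
        have ind: "indicator (cube s m r) Tx = (indicator (cube s 0 R) x :: real)"
        proof -
          have "Tx \<in> cube s m r \<longleftrightarrow> (\<forall>i<s. \<bar>\<sigma> * x i\<bar> \<le> r)"
            by (simp add: cube_mem Tx_def)
          also have "\<dots> \<longleftrightarrow> (\<forall>i<s. \<bar>x i\<bar> \<le> R)"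
            using \<sigma> R(2) by (simp add: abs_mult flip: R(2))
          also have "\<dots> \<longleftrightarrow> x \<in> cube s 0 R"
            using x by (simp add: cube_mem space_leb)
          finally show ?thesis by (simp add: indicator_def)
        qed
        have ph: "phiN \<alpha> \<beta> s Tx = \<Phi> x"
          unfolding \<Phi>_def by (rule phiN_cong) (simp add: Tx_def mv)
        have inn: "inner_s s t' Tx = inner_s s t' mv + \<sigma> * inner_s s t' x"
        proof -
          have "inner_s s t' Tx = (\<Sum>i<s. t' i * mv i + \<sigma> * (t' i * x i))"
            unfolding inner_s_def by (intro sum.cong) (auto simp: Tx_def mv algebra_simps)
          then show ?thesis by (simp add: inner_s_def sum.distrib sum_distrib_left)
        qed
        have ex: "A * P0 - \<tau> * inner_s s t' mv + (- A * \<Phi> x + \<tau> * (inner_s s t' mv + \<sigma> * inner_s s t' x))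
               = inner_s s t' x + (- A * (\<Phi> x - P0))"
          using \<sigma>\<tau> by (simp add: algebra_simps flip: mult.assoc)
        have "E * g Tx = indicator (cube s 0 R) x * exp (A * P0 - \<tau> * inner_s s t' mv + (- A * \<Phi> x + \<tau> * (inner_s s t' mv + \<sigma> * inner_s s t' x)))"
          unfolding g_def E_def ind ph inn by (simp add: exp_add)
        also have "\<dots> = indicator (cube s 0 R) x * exp (inner_s s t' x + (- A * (\<Phi> x - P0)))"
          by (simp only: ex)
        also have "\<dots> = exp (inner_s s t' x) * rho_un \<alpha> \<beta> N s r x"
          unfolding rho exp_add by simp
        finally show ?thesis by (simp add: Tx_def)
      qed
      have pow: "A powr (real s / 2) * \<sigma>^s = 1"
      proof -
        have "\<tau> = A powr (1/2)" using A by (simp add: \<tau>_def A_def powr_half_sqrt)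
        then have "\<tau>^s = A powr (real s / 2)"
          using A by (simp add: powr_realpow[symmetric] powr_powr)
        then have "A powr (real s / 2) * \<sigma>^s = (\<sigma> * \<tau>)^s" by (simp add: power_mult_distrib)
        then show ?thesis using \<sigma>\<tau> by simp
      qed
      have "JN \<alpha> \<beta> N s t' r = (A powr (real s / 2) * \<sigma>^s) * (\<integral>x. E * g (\<lambda>i\<in>{..<s}. m + \<sigma> * x i) \<partial>lebesgue_s s)"
        unfolding JN1 cvg by (simp add: ac_simps)
      also have "\<dots> = (\<integral>x. E * g (\<lambda>i\<in>{..<s}. m + \<sigma> * x i) \<partial>lebesgue_s s)" by (simp add: pow)
      also have "\<dots> = (\<integral>x. exp (inner_s s t' x) * rho_un \<alpha> \<beta> N s r x \<partial>lebesgue_s s)"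
        by (rule Bochner_Integration.integral_cong[OF refl pw])
      finally show ?thesis .
    qed
    have slc: "strongly_log_concave_density s (\<lambda>x. rho_un \<alpha> \<beta> N s r x / Z)"
    proof -
      define C where "C = cube s 0 R"
      define Uf where "Uf w = A * (\<Phi> w - P0) + ln Z" for w
      have Cconv: "convex_s s C"
        unfolding convex_s_def
      proof (intro conjI ballI allI impI)
        show "C \<subseteq> (\<Pi>\<^sub>E i\<in>{..<s}. UNIV)" by (auto simp: C_def cube_mem)
        fix x y and u :: real assume x: "x \<in> C" and y: "y \<in> C" and u: "0 \<le> u \<and> u \<le> 1"
        show "(\<lambda>i. if i < s then u * x i + (1 - u) * y i else undefined) \<in> C"
          unfolding C_def cube_mem
          using x y u by (auto simp: C_def cube_mem PiE_def extensional_def intro!: comb_bound)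
      qed
      have core: "Uf z - c / 2 * (\<Sum>i<s. (z i)^2) \<le> u * (Uf x - c / 2 * (\<Sum>i<s. (x i)^2)) + (1 - u) * (Uf y - c / 2 * (\<Sum>i<s. (y i)^2))"
        if x: "x \<in> C" and y: "y \<in> C" and u: "0 \<le> (u::real)" "u \<le> 1"
          and z: "z = (\<lambda>i. if i < s then u * x i + (1 - u) * y i else undefined)" for x y z u
      proof -
        define y0 where "y0 i = m + \<sigma> * y i" for i
        define d where "d i = \<sigma> * (x i - y i)" for i
        define D where "D = (\<Sum>i<s. (x i - y i)^2)"
        have xb: "\<bar>x i\<bar> \<le> R" "\<bar>y i\<bar> \<le> R" if "i < s" for i using x y that by (auto simp: C_def cube_mem)
        have seg: "phiN \<alpha> \<beta> s (\<lambda>i. y0 i + u * d i) \<le> u * phiN \<alpha> \<beta> s (\<lambda>i. y0 i + 1 * d i)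
            + (1 - u) * phiN \<alpha> \<beta> s (\<lambda>i. y0 i + 0 * d i) - c / 2 * (\<Sum>i<s. d i ^ 2) * (u * (1 - u))"
          unfolding c_def
        proof (rule phiN_seg[OF s ab r0(3) _ u])
          fix u' :: real and k assume u': "u' \<in> {0..1}" and k: "k < s"
          show "1 - tanh (xAe \<alpha> \<beta> s (\<lambda>i. y0 i + u' * d i) k)^2 \<le> w0"
          proof (rule W[OF _ k], intro allI impI)
            fix i assume i: "i < s"
            have e: "y0 i + u' * d i - m = \<sigma> * (u' * x i + (1 - u') * y i)"
              by (simp add: y0_def d_def algebra_simps)
            have "\<bar>u' * x i + (1 - u') * y i\<bar> \<le> R" using xb[OF i] u' by (intro comb_bound) auto
            then have "\<sigma> * \<bar>u' * x i + (1 - u') * y i\<bar> \<le> \<sigma> * R" using \<sigma> by (intro mult_left_mono) auto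
            then show "\<bar>y0 i + u' * d i - m\<bar> \<le> r0" unfolding e using R(2) r \<sigma> by (simp add: abs_mult)
          qed
        qed
        have Pz: "\<Phi> z = phiN \<alpha> \<beta> s (\<lambda>i. y0 i + u * d i)"
          unfolding \<Phi>_def by (rule phiN_cong) (simp add: z mv y0_def d_def algebra_simps)
        have Px: "\<Phi> x = phiN \<alpha> \<beta> s (\<lambda>i. y0 i + 1 * d i)"
          unfolding \<Phi>_def by (rule phiN_cong) (simp add: mv y0_def d_def algebra_simps)
        have Py: "\<Phi> y = phiN \<alpha> \<beta> s (\<lambda>i. y0 i + 0 * d i)"
          unfolding \<Phi>_def by (rule phiN_cong) (simp add: mv y0_def d_def algebra_simps)
        have Dd: "(\<Sum>i<s. d i ^ 2) = \<sigma>^2 * D"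
          by (simp add: d_def D_def power_mult_distrib sum_distrib_left)
        have Sz: "(\<Sum>i<s. (z i)^2) = u * (\<Sum>i<s. (x i)^2) + (1-u) * (\<Sum>i<s. (y i)^2) - u*(1-u) * D"
        proof -
          have "(\<Sum>i<s. (z i)^2) = (\<Sum>i<s. (u * x i + (1-u) * y i)^2)" by (intro sum.cong) (auto simp: z)
          then show ?thesis by (simp add: sq_comb D_def)
        qed
        have seg2: "\<Phi> z \<le> u * \<Phi> x + (1 - u) * \<Phi> y - c / 2 * (\<sigma>^2 * D) * (u * (1 - u))"
          using seg unfolding Pz Px Py Dd .
        have "A * (u * \<Phi> x + (1 - u) * \<Phi> y - \<Phi> z) \<ge> A * (c / 2 * (\<sigma>^2 * D) * (u * (1 - u)))"
          using seg2 A by (intro mult_left_mono) auto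
        also have "A * (c / 2 * (\<sigma>^2 * D) * (u * (1 - u))) = (A * \<sigma>^2) * (c / 2 * D * (u * (1 - u)))"
          by (simp only: mult_ac)
        also have "\<dots> = c / 2 * D * (u * (1 - u))" using A\<sigma> by simp
        finally have X1: "A * (u * \<Phi> x + (1 - u) * \<Phi> y - \<Phi> z) \<ge> c / 2 * D * (u * (1 - u))" .
        have X2: "c / 2 * (u * (\<Sum>i<s. (x i)^2) + (1-u) * (\<Sum>i<s. (y i)^2) - (\<Sum>i<s. (z i)^2)) = c / 2 * D * (u * (1 - u))"
          unfolding Sz by (simp add: algebra_simps)
        have eq: "u * (Uf x - c / 2 * (\<Sum>i<s. (x i)^2)) + (1 - u) * (Uf y - c / 2 * (\<Sum>i<s. (y i)^2)) - (Uf z - c / 2 * (\<Sum>i<s. (z i)^2))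
          = A * (u * \<Phi> x + (1 - u) * \<Phi> y - \<Phi> z) - c / 2 * (u * (\<Sum>i<s. (x i)^2) + (1-u) * (\<Sum>i<s. (y i)^2) - (\<Sum>i<s. (z i)^2))"
          by (simp add: Uf_def field_simps)
        show ?thesis using eq X1 X2 by linarith
      qed
      have sc: "strongly_convex_on_s s C Uf"
        unfolding strongly_convex_on_s_def Let_def
      proof (intro conjI exI[of _ c] ballI allI impI)
        show "convex_s s C" by (rule Cconv)
        show "0 < c" by (rule c)
        fix x y and u :: real assume "x \<in> C" "y \<in> C" "0 \<le> u \<and> u \<le> 1"
        then show "Uf (\<lambda>i. if i < s then u * x i + (1 - u) * y i else undefined) -
           c / 2 * (\<Sum>i<s. ((if i < s then u * x i + (1 - u) * y i else undefined))\<^sup>2)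
           \<le> u * (Uf x - c / 2 * (\<Sum>i<s. (x i)\<^sup>2)) + (1 - u) * (Uf y - c / 2 * (\<Sum>i<s. (y i)\<^sup>2))"
          using core[of x y u "\<lambda>i. if i < s then u * x i + (1 - u) * y i else undefined"] by auto
      qed
      have dens: "rho_un \<alpha> \<beta> N s r x / Z = (if x \<in> C then exp (- Uf x) else 0)" for x
      proof -
        have "exp (- Uf x) = exp (- A * (\<Phi> x - P0)) / Z"
          using Z by (simp add: Uf_def exp_diff exp_minus exp_add field_simps)
        then show ?thesis by (simp add: rho C_def)
      qed
      show ?thesis
        unfolding strongly_log_concave_density_def
      proof (intro conjI exI[of _ C] exI[of _ Uf] ballI)
        show "(\<lambda>x. rho_un \<alpha> \<beta> N s r x / Z) \<in> borel_measurable (lebesgue_s s)" by measurable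
        show "0 \<le> rho_un \<alpha> \<beta> N s r x / Z" for x using rho_bd[of x] Z by simp
        show "integrable (lebesgue_s s) (\<lambda>x. rho_un \<alpha> \<beta> N s r x / Z)" using int_rho by simp
        show "(\<integral>x. rho_un \<alpha> \<beta> N s r x / Z \<partial>lebesgue_s s) = 1" using Z by (simp add: Z_def[symmetric])
        show "strongly_convex_on_s s C Uf" by (rule sc)
        show "rho_un \<alpha> \<beta> N s r x / Z = (if x \<in> C then exp (- Uf x) else 0)" for x by (rule dens)
      qed
    qed
    have JN0: "JN \<alpha> \<beta> N s (\<lambda>_. 0) r = Z" using JN[of "\<lambda>_. 0"] by (simp add: inner_s_def Z_def)
    show "let Z = (\<integral>x. rho_un \<alpha> \<beta> N s r x \<partial>lebesgue_s s);
         \<rho> = (\<lambda>x. rho_un \<alpha> \<beta> N s r x / Z)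
     in strongly_log_concave_density s \<rho> \<and>
        JN \<alpha> \<beta> N s t r / JN \<alpha> \<beta> N s (\<lambda>_. 0) r
          = (\<integral>x. exp (inner_s s t x) * \<rho> x \<partial>lebesgue_s s)"
      unfolding Let_def Z_def[symmetric] using slc JN[of t] JN0 by simp
  qed
qed

end
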